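(* Let $n$ be a positive integer, $\sigma\in(0,1]$ with $\sigma n$ an integer, and let $S\subseteq[n]$ with $|S|=\sigma n$. Let $\alpha>0$ be such that $k=\alpha/\sigma$ is a positive integer. Construct $(X_1,Z_1,\dots,Z_k)$ as follows: draw $Y_1,\dots,Y_k$ independently and uniformly from $[n]$; for each $i$ with $Y_i\notin S$ set $Z_i=Y_i$; for each $i$ with $Y_i\in S$ draw $\tilde W_i$ uniformly from $S$ (independently of everything else) and set $Z_i=\tilde W_i$; if there is at least one $i$ with $Y_i\in S$, let $X_1$ be chosen uniformly at random from the set of drawn values $\{\tilde W_i\}$, and otherwise draw $X_1$ uniformly from $S$ independently. Then: (a) $X_1$ is uniformly distributed on $S$; (b) each $Z_i$ is uniformly distributed on $[n]$; (c) $Z_1,\dots,Z_k$ are independent; (d) with probability $1-(1-\sigma)^{\alpha/\sigma}$, $X_1\in\{Z_1,\dots,Z_k\}$. *)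

theory Defs
  imports "HOL-Probability.Probability"
begin

(* Indices are 0..k-1 (the paper's 1..k); random functions
   are set to the default value 0 outside of the index range. Y and Wt are drawn i.i.d.
   (Wt i is only used when Y i lies in S); V is the independent fallback draw for X1. *)

definition drawn_indices :: "nat set \<Rightarrow> nat \<Rightarrow> (nat \<Rightarrow> nat) \<Rightarrow> nat set" where
  "drawn_indices S k Y = {i. i < k \<and> Y i \<in> S}"

definition Z_of :: "nat set \<Rightarrow> nat \<Rightarrow> (nat \<Rightarrow> nat) \<Rightarrow> (nat \<Rightarrow> nat) \<Rightarrow> (nat \<Rightarrow> nat)" where
  "Z_of S k Y Wt = (\<lambda>i. if i < k then (if Y i \<in> S then Wt i else Y i) else 0)"

definition construction :: "nat \<Rightarrow> nat set \<Rightarrow> nat \<Rightarrow> (nat \<times> (nat \<Rightarrow> nat)) pmf" where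
  "construction n S k = do {
       Y \<leftarrow> Pi_pmf {..<k} 0 (\<lambda>_. pmf_of_set {1..n});
       Wt \<leftarrow> Pi_pmf {..<k} 0 (\<lambda>_. pmf_of_set S);
       V \<leftarrow> pmf_of_set S;
       X \<leftarrow> (if drawn_indices S k Y = {} then return_pmf V
              else pmf_of_set (Wt ` drawn_indices S k Y));
       return_pmf (X, Z_of S k Y Wt) }"

end

theory Submission imports Defs begin

definition qd :: "nat \<Rightarrow> nat set \<Rightarrow> nat pmf" where
  "qd n S = bind_pmf (pmf_of_set {1..n}) (\<lambda>y. bind_pmf (pmf_of_set S) (\<lambda>w. return_pmf (if y \<in> S then w else y)))"

lemma snd_constr: "map_pmf snd (construction n S k) = Pi_pmf {..<k} 0 (\<lambda>_. qd n S)"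
proof -
  have "Pi_pmf {..<k} 0 (\<lambda>_. qd n S) =
    do {Y \<leftarrow> Pi_pmf {..<k} 0 (\<lambda>_. pmf_of_set {1..n});
        Pi_pmf {..<k} 0 (\<lambda>i. bind_pmf (pmf_of_set S) (\<lambda>w. return_pmf (if Y i \<in> S then w else Y i)))}"
    unfolding qd_def by (rule Pi_pmf_bind) simp
  also have "\<dots> = do {Y \<leftarrow> Pi_pmf {..<k} 0 (\<lambda>_. pmf_of_set {1..n});
        Wt \<leftarrow> Pi_pmf {..<k} 0 (\<lambda>_. pmf_of_set S);
        Pi_pmf {..<k} 0 (\<lambda>i. return_pmf (if Y i \<in> S then Wt i else Y i))}"
    by (subst Pi_pmf_bind[where d'=0]) simp_all
  also have "\<dots> = do {Y \<leftarrow> Pi_pmf {..<k} 0 (\<lambda>_. pmf_of_set {1..n});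
        Wt \<leftarrow> Pi_pmf {..<k} 0 (\<lambda>_. pmf_of_set S);
        return_pmf (Z_of S k Y Wt)}"
    by (simp add: Z_of_def)
  finally show ?thesis
    unfolding construction_def by (simp add: map_bind_pmf map_return_pmf)
qed

lemma qd_unif:
  assumes "S \<subseteq> {1..n}" "S \<noteq> {}"
  shows "qd n S = pmf_of_set {1..n}"
proof (rule pmf_eqI)
  fix x
  have fS: "finite S" using assms finite_subset by blast
  have n0: "n > 0" using assms by auto
  have "pmf (qd n S) x = (\<Sum>y\<in>{1..n}. (\<Sum>w\<in>S. pmf (return_pmf (if y \<in> S then w else y)) x) / card S) / n"
    unfolding qd_def pmf_bind using fS assms n0
    by (simp add: integral_pmf_of_set sum_divide_distrib[symmetric])
  also have "\<dots> = (\<Sum>y\<in>{1..n}. (if y \<in> S then indicator S x / card S else indicator {y} x)) / n"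
  proof -
    have "(\<Sum>w\<in>S. pmf (return_pmf (if y \<in> S then w else y)) x) / card S
       = (if y \<in> S then indicator S x / card S else indicator {y} x)" for y
    proof (cases "y \<in> S")
      case True
      have "(\<Sum>w\<in>S. pmf (return_pmf w) x) = (\<Sum>w\<in>S. if w = x then 1 else 0)"
        by (intro sum.cong) (auto simp: indicator_def)
      also have "\<dots> = indicator S x" using fS by (simp add: indicator_def)
      finally show ?thesis using True by simp
    next
      case False
      then show ?thesis using fS assms(2) by (simp add: indicator_def)
    qed
    then show ?thesis by simp
  qed
  also have "\<dots> = indicator {1..n} x / n"
  proof (cases "x \<in> S")
    case True
    then have "x \<in> {1..n}" using assms by auto
    have "(\<Sum>y\<in>{1..n}. (if y \<in> S then indicator S x / card S else indicator {y} x))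
       = (\<Sum>y\<in>S. 1 / real (card S))"
      using True assms(1) by (intro sum.mono_neutral_cong_right) (auto simp: indicator_def)
    also have "\<dots> = 1" using fS assms(2) by simp
    finally show ?thesis using \<open>x \<in> {1..n}\<close> by simp
  next
    case False
    have "(\<Sum>y\<in>{1..n}. (if y \<in> S then indicator S x / card S else indicator {y} x))
       = (\<Sum>y\<in>{1..n}. (if y = x then 1 else 0 :: real))"
      using False by (intro sum.cong) (auto simp: indicator_def)
    also have "\<dots> = indicator {1..n} x" by (simp add: indicator_def)
    finally show ?thesis by simp
  qed
  also have "\<dots> = pmf (pmf_of_set {1..n}) x" using n0 by simp
  finally show "pmf (qd n S) x = pmf (pmf_of_set {1..n}) x" .
qed

definition sw :: "nat \<Rightarrow> nat \<Rightarrow> nat \<Rightarrow> nat" where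
  "sw s t x = (if x = s then t else if x = t then s else x)"

lemma sw_inj: "inj (sw s t)"
  unfolding sw_def inj_def by auto

lemma sw_image: "s \<in> S \<Longrightarrow> t \<in> S \<Longrightarrow> sw s t ` S = S"
  unfolding sw_def by (auto simp: image_iff)

definition FX :: "nat set \<Rightarrow> nat \<Rightarrow> (nat \<Rightarrow> nat) \<Rightarrow> (nat \<Rightarrow> nat) \<Rightarrow> nat \<Rightarrow> nat pmf" where
  "FX S k Y Wt V = (if drawn_indices S k Y = {} then return_pmf V
              else pmf_of_set (Wt ` drawn_indices S k Y))"

lemma fst_constr: "map_pmf fst (construction n S k) =
  do {Y \<leftarrow> Pi_pmf {..<k} 0 (\<lambda>_. pmf_of_set {1..n});
       Wt \<leftarrow> Pi_pmf {..<k} 0 (\<lambda>_. pmf_of_set S);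
       V \<leftarrow> pmf_of_set S; FX S k Y Wt V}"
  unfolding construction_def FX_def by (simp add: map_bind_pmf map_return_pmf bind_return_pmf')

lemma finite_drawn: "finite (drawn_indices S k Y)"
  unfolding drawn_indices_def by auto

lemma fst_unif:
  assumes S: "S \<subseteq> {1..n}" "S \<noteq> {}"
  shows "map_pmf fst (construction n S k) = pmf_of_set S"
proof -
  have fS: "finite S" using assms finite_subset by blast
  let ?P = "map_pmf fst (construction n S k)"
  have inv: "map_pmf (sw s t) ?P = ?P" if st: "s \<in> S" "t \<in> S" for s t
  proof -
    let ?PY = "Pi_pmf {..<k} 0 (\<lambda>_. pmf_of_set {1..n})"
    let ?PW = "Pi_pmf {..<k} 0 (\<lambda>_. pmf_of_set S)"
    have s0: "sw s t 0 = 0" using st S unfolding sw_def by auto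
    have mS: "map_pmf (sw s t) (pmf_of_set S) = pmf_of_set S"
      using map_pmf_of_set_inj[OF inj_on_subset[OF sw_inj] _ fS] S sw_image[OF st] by auto
    have mW: "map_pmf (\<lambda>h. sw s t \<circ> h) ?PW = ?PW"
      using Pi_pmf_map[of "{..<k}" "sw s t" 0 0 "\<lambda>_. pmf_of_set S", symmetric] s0 mS by simp
    have F: "map_pmf (sw s t) (FX S k Y W V) = FX S k Y (sw s t \<circ> W) (sw s t V)" for Y W V
      unfolding FX_def using map_pmf_of_set_inj[OF inj_on_subset[OF sw_inj], of "W ` drawn_indices S k Y"]
      by (auto simp: map_return_pmf finite_drawn image_comp)
    have "map_pmf (sw s t) ?P = do {Y \<leftarrow> ?PY; Wt \<leftarrow> ?PW; V \<leftarrow> pmf_of_set S;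
           FX S k Y (sw s t \<circ> Wt) (sw s t V)}"
      unfolding fst_constr by (simp add: map_bind_pmf F)
    also have "\<dots> = do {Y \<leftarrow> ?PY; Wt \<leftarrow> map_pmf (\<lambda>h. sw s t \<circ> h) ?PW;
           V \<leftarrow> map_pmf (sw s t) (pmf_of_set S); FX S k Y Wt V}"
      by (simp add: bind_map_pmf)
    also have "\<dots> = ?P" unfolding mW mS fst_constr ..
    finally show ?thesis .
  qed
  have const: "pmf ?P s = pmf ?P t" if st: "s \<in> S" "t \<in> S" for s t
  proof -
    have "pmf ?P s = pmf (map_pmf (sw s t) ?P) (sw s t s)" by (rule pmf_map_inj'[OF sw_inj, symmetric])
    also have "\<dots> = pmf ?P t" using inv[OF st] by (simp add: sw_def)
    finally show ?thesis .
  qed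
  have supp: "set_pmf ?P \<subseteq> S"
  proof -
    have "set_pmf (FX S k Y W V) \<subseteq> S" if "W \<in> set_pmf (Pi_pmf {..<k} 0 (\<lambda>_. pmf_of_set S))" "V \<in> S" for Y W V
    proof -
      have "W i \<in> S" if "i < k" for i
        using \<open>W \<in> _\<close> that set_Pi_pmf[of "{..<k}" 0 "\<lambda>_. pmf_of_set S"] fS S
        by (auto simp: PiE_dflt_def)
      then show ?thesis using \<open>V \<in> S\<close> unfolding FX_def drawn_indices_def
        by (auto simp: finite_drawn[unfolded drawn_indices_def])
    qed
    then show ?thesis unfolding fst_constr using fS S by (auto simp: set_bind_pmf)
  qed
  obtain s0 where s0: "s0 \<in> S" using S by blast
  have "(\<Sum>x\<in>S. pmf ?P x) = 1" by (rule sum_pmf_eq_1[OF fS supp])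
  also have "(\<Sum>x\<in>S. pmf ?P x) = card S * pmf ?P s0"
    using const[OF _ s0] by simp
  finally have c: "pmf ?P s0 = 1 / card S" using fS S
    by (simp add: field_simps)
  show ?thesis
  proof (rule pmf_eqI)
    fix x show "pmf ?P x = pmf (pmf_of_set S) x"
    proof (cases "x \<in> S")
      case True then show ?thesis using c const[OF True s0] fS S by simp
    next
      case False then show ?thesis using supp fS S by (auto simp: set_pmf_eq)
    qed
  qed
qed


lemma event_map:
  assumes S: "S \<subseteq> {1..n}" "S \<noteq> {}"
  shows "map_pmf (\<lambda>(x, z). \<exists>i<k. z i = x) (construction n S k) =
    map_pmf (\<lambda>Y. drawn_indices S k Y \<noteq> {}) (Pi_pmf {..<k} 0 (\<lambda>_. pmf_of_set {1..n}))"
proof -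
  have fS: "finite S" using assms finite_subset by blast
  have inner: "map_pmf (\<lambda>X. \<exists>i<k. Z_of S k Y W i = X) (FX S k Y W V) = return_pmf (drawn_indices S k Y \<noteq> {})"
    if "V \<in> S" for Y W V
  proof (cases "drawn_indices S k Y = {}")
    case True
    then have "\<forall>i<k. Y i \<notin> S" unfolding drawn_indices_def by auto
    then show ?thesis using True \<open>V \<in> S\<close> unfolding FX_def Z_of_def by (auto simp: map_return_pmf)
  next
    case False
    have "map_pmf (\<lambda>X. \<exists>i<k. Z_of S k Y W i = X) (FX S k Y W V) = map_pmf (\<lambda>_. True) (FX S k Y W V)"
    proof (rule map_pmf_cong, simp)
      fix X assume "X \<in> set_pmf (FX S k Y W V)"
      then obtain j where "j \<in> drawn_indices S k Y" "X = W j"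
        using False finite_drawn unfolding FX_def by auto
      then show "(\<exists>i<k. Z_of S k Y W i = X) = True"
        unfolding drawn_indices_def Z_of_def by auto
    qed
    then show ?thesis using False by simp
  qed
  let ?PY = "Pi_pmf {..<k} 0 (\<lambda>_. pmf_of_set {1..n})"
  let ?PW = "Pi_pmf {..<k} 0 (\<lambda>_. pmf_of_set S)"
  have "map_pmf (\<lambda>(x, z). \<exists>i<k. z i = x) (construction n S k) =
     bind_pmf ?PY (\<lambda>Y. bind_pmf ?PW (\<lambda>W. bind_pmf (pmf_of_set S) (\<lambda>V.
        map_pmf (\<lambda>X. \<exists>i<k. Z_of S k Y W i = X) (FX S k Y W V))))"
    unfolding construction_def FX_def map_pmf_def by (simp add: bind_assoc_pmf bind_return_pmf)
  also have "\<dots> = bind_pmf ?PY (\<lambda>Y. bind_pmf ?PW (\<lambda>W. bind_pmf (pmf_of_set S) (\<lambda>V.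
        return_pmf (drawn_indices S k Y \<noteq> {}))))"
    by (intro bind_pmf_cong refl inner) (use fS S in auto)
  also have "\<dots> = map_pmf (\<lambda>Y. drawn_indices S k Y \<noteq> {}) ?PY"
    by (simp add: map_pmf_def)
  finally show ?thesis .
qed


theorem mainTheorem2:
  fixes n k :: nat and \<sigma> \<alpha> :: real and S :: "nat set"
  assumes "n > 0"
    and "0 < \<sigma>" and "\<sigma> \<le> 1"
    and "\<sigma> * real n \<in> \<int>"
    and "S \<subseteq> {1..n}"
    and "real (card S) = \<sigma> * real n"
    and "\<alpha> > 0"
    and "k > 0" and "real k = \<alpha> / \<sigma>"
  shows "(map_pmf fst (construction n S k) = pmf_of_set S)
    \<and> (\<forall>i<k. map_pmf (\<lambda>(x, z). z i) (construction n S k) = pmf_of_set {1..n})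
    \<and> (map_pmf snd (construction n S k) =
           Pi_pmf {..<k} 0 (\<lambda>i. map_pmf (\<lambda>(x, z). z i) (construction n S k)))
    \<and> (measure_pmf.prob (construction n S k) {(x, z). \<exists>i<k. z i = x}
           = 1 - (1 - \<sigma>) powr (\<alpha> / \<sigma>))"
proof -
  have fS: "finite S" using assms(5) finite_subset by blast
  have "real (card S) > 0" using assms(1,2,6) by simp
  then have "card S > 0" by simp
  then have Sne: "S \<noteq> {}" by auto
  note S = assms(5) Sne
  have comp: "map_pmf (\<lambda>(x, z). z i) (construction n S k) = pmf_of_set {1..n}" if "i < k" for i
  proof -
    have "map_pmf (\<lambda>(x, z). z i) (construction n S k) = map_pmf (\<lambda>z. z i) (map_pmf snd (construction n S k))"
      by (simp add: pmf.map_comp o_def case_prod_unfold)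
    also have "\<dots> = qd n S" unfolding snd_constr using Pi_pmf_component[of "{..<k}" i 0] that by simp
    finally show ?thesis using qd_unif[OF S] by simp
  qed
  have indep: "map_pmf snd (construction n S k) =
           Pi_pmf {..<k} 0 (\<lambda>i. map_pmf (\<lambda>(x, z). z i) (construction n S k))"
    unfolding snd_constr qd_unif[OF S] by (rule Pi_pmf_cong) (auto simp: comp)
  let ?PY = "Pi_pmf {..<k} 0 (\<lambda>_. pmf_of_set {1..n})"
  have "measure_pmf.prob (construction n S k) {(x, z). \<exists>i<k. z i = x}
     = measure_pmf.prob (map_pmf (\<lambda>(x, z). \<exists>i<k. z i = x) (construction n S k)) {True}"
    by (simp add: vimage_def case_prod_unfold)
  also have "\<dots> = measure_pmf.prob ?PY {Y. drawn_indices S k Y \<noteq> {}}"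
    unfolding event_map[OF S] by (simp add: vimage_def)
  also have "\<dots> = 1 - measure_pmf.prob ?PY {Y. drawn_indices S k Y = {}}"
    using measure_pmf.prob_compl[of "{Y. drawn_indices S k Y = {}}" ?PY]
    by (simp add: Compl_eq_Diff_UNIV[symmetric] Collect_neg_eq)
  also have "{Y. drawn_indices S k Y = {}} = Pi {..<k} (\<lambda>_. - S)"
    unfolding drawn_indices_def by auto
  also have "measure_pmf.prob ?PY (Pi {..<k} (\<lambda>_. - S)) = (\<Prod>i<k. measure_pmf.prob (pmf_of_set {1..n}) (- S))"
    by (rule measure_Pi_pmf_Pi) simp
  also have "measure_pmf.prob (pmf_of_set {1..n}) (- S) = 1 - \<sigma>"
  proof -
    have "{1..n} \<inter> - S = {1..n} - S" by auto
    then have "card ({1..n} \<inter> - S) = n - card S" using S fS by (simp add: card_Diff_subset)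
    moreover have "card S \<le> n" using card_mono[OF _ assms(5)] by simp
    ultimately show ?thesis using assms(1,6) by (simp add: measure_pmf_of_set of_nat_diff field_simps)
  qed
  also have "(\<Prod>i<k. 1 - \<sigma>) = (1 - \<sigma>) powr (\<alpha> / \<sigma>)"
  proof (cases "\<sigma> = 1")
    case True then show ?thesis using assms(8) by simp
  next
    case False
    then have "1 - \<sigma> > 0" using assms(3) by simp
    then show ?thesis using assms(9)[symmetric] by (simp add: powr_realpow)
  qed
  finally show ?thesis using fst_unif[OF S] comp indep by blast
qed

end
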